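(* Let $S\subset\mathbb{R}^d$ be a nonempty compact convex set with diameter $D:=\sup_{x,y\in S}\|x-y\|$, and let $f$ be differentiable on $S$ with $L$-Lipschitz gradient on $S$ (not necessarily convex). Let $G:=\sup_{x\in S}\|\nabla f(x)\|<\infty$, fix $C\ge\max\{LD^2,\,GD\}$ with $C>0$, and let $f^*:=\inf_{x\in S}f(x)$. Let $\delta\ge0$ and suppose that for every $x\in S$ a vector $g_\delta(x)\in\mathbb{R}^d$ is available with \[ \big|\langle \nabla f(x)-g_\delta(x),\,s-x\rangle\big|\le\delta\,\|\nabla f(x)\|\quad\text{for all } s\in S. \] Let $\mathcal G(x):=\max_{s\in S}\langle\nabla f(x),\,x-s\rangle$ (the Frank–Wolfe gap) and $\tilde{\mathcal G}(x):=\max_{s\in S}\langle g_\delta(x),\,x-s\rangle$. Given $x^0\in S$, define iterates for $k=0,1,2,\dots$ by choosing $s^k\in\arg\min_{s\in S}\langle g_\delta(x^k),\,s-x^k\rangle$, setting \[ \overline\alpha_k:=\frac{\big(\tilde{\mathcal G}(x^k)-\delta\|\nabla f(x^k)\|\big)_+}{C},\qquad x^{k+1}:=x^k+\overline\alpha_k(s^k-x^k), \] where $(u)_+:=\max\{u,0\}$. Then for every $K\ge0$, \[ \min_{0\le k\le K}\big(\mathcal G(x^k)-2\delta\|\nabla f(x^k)\|\big)_+\le\sqrt{\frac{2C\,(f(x^0)-f^* )}{K+1}}. \]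
   Context: $\|\cdot\|$ is the Euclidean norm and $\langle\cdot,\cdot\rangle$ the Euclidean inner product. *)

theory Defs
  imports "HOL-Analysis.Analysis"
begin

definition fw_gap :: "'a::euclidean_space set \<Rightarrow> 'a \<Rightarrow> 'a \<Rightarrow> real" where
  "fw_gap S v x = (SUP s\<in>S. v \<bullet> (x - s))"

definition pos_part :: "real \<Rightarrow> real" where
  "pos_part u = max u 0"

end

theory Submission
  imports Defs
begin

lemma descent:
  fixes S :: "'a::euclidean_space set" and f :: "'a \<Rightarrow> real" and f' :: "'a \<Rightarrow> 'a"
  assumes cvx: "convex S" and xS: "x \<in> S" and yS: "y \<in> S"
    and deriv: "\<And>y. y \<in> S \<Longrightarrow> (f has_derivative (\<lambda>h. f' y \<bullet> h)) (at y within S)"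
    and lip: "\<And>y z. y \<in> S \<Longrightarrow> z \<in> S \<Longrightarrow> norm (f' y - f' z) \<le> L * norm (y - z)"
  shows "f y \<le> f x + f' x \<bullet> (y - x) + L / 2 * (norm (y - x))^2"
proof -
  define d where "d = y - x"
  define p where "p t = x + t *\<^sub>R d" for t :: real
  have pS: "p t \<in> S" if "t \<in> {0..1}" for t
  proof -
    have "p t = (1 - t) *\<^sub>R x + t *\<^sub>R y" by (simp add: p_def d_def algebra_simps)
    thus ?thesis using that cvx xS yS by (auto simp: convex_alt)
  qed
  define h where "h t = f (p t) - t * (f' x \<bullet> d) - L / 2 * t^2 * (norm d)^2" for t
  define h' where "h' t = (\<lambda>r. r * (f' (p t) \<bullet> d) - r * (f' x \<bullet> d) - L * t * r * (norm d)^2)" for t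
  have hd: "(h has_derivative h' t) (at t within {0..1})" if t: "t \<in> {0..1}" for t
  proof -
    have p1: "(p has_derivative (\<lambda>r. r *\<^sub>R d)) (at t within {0..1})"
      unfolding p_def by (auto intro!: derivative_eq_intros)
    have f1: "(f has_derivative (\<lambda>h. f' (p t) \<bullet> h)) (at (p t) within p ` {0..1})"
      using deriv[OF pS[OF t]] by (rule has_derivative_subset) (use pS in auto)
    have "((f \<circ> p) has_derivative (\<lambda>h. f' (p t) \<bullet> h) \<circ> (\<lambda>r. r *\<^sub>R d)) (at t within {0..1})"
      by (rule diff_chain_within[OF p1 f1])
    hence c: "((\<lambda>t. f (p t)) has_derivative (\<lambda>r. r * (f' (p t) \<bullet> d))) (at t within {0..1})"
      by (simp add: o_def)
    show ?thesis
    proof -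
      have q: "((\<lambda>t. t * (f' x \<bullet> d) + L / 2 * t^2 * (norm d)^2) has_derivative
          (\<lambda>r. r * (f' x \<bullet> d) + L * t * r * (norm d)^2)) (at t within {0..1})"
        by (auto intro!: derivative_eq_intros simp: algebra_simps)
      have "((\<lambda>t. f (p t) - (t * (f' x \<bullet> d) + L / 2 * t^2 * (norm d)^2)) has_derivative
          (\<lambda>r. r * (f' (p t) \<bullet> d) - (r * (f' x \<bullet> d) + L * t * r * (norm d)^2))) (at t within {0..1})"
        by (rule has_derivative_diff[OF c q])
      moreover have "h = (\<lambda>t. f (p t) - (t * (f' x \<bullet> d) + L / 2 * t^2 * (norm d)^2))"
        by (simp add: h_def fun_eq_iff)
      moreover have "h' t = (\<lambda>r. r * (f' (p t) \<bullet> d) - (r * (f' x \<bullet> d) + L * t * r * (norm d)^2))"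
        by (simp add: h'_def fun_eq_iff)
      ultimately show ?thesis by simp
    qed
  qed
  obtain t where t: "t \<in> {0..1}" and eq: "h 1 - h 0 = h' t (1 - 0)"
    using mvt_very_simple[of 0 1 h h'] hd by auto
  have "(f' (p t) - f' x) \<bullet> d \<le> norm (f' (p t) - f' x) * norm d" by (rule norm_cauchy_schwarz)
  also have "\<dots> \<le> (L * norm (p t - x)) * norm d"
    by (rule mult_right_mono[OF lip[OF pS[OF t] xS]]) simp
  also have "\<dots> = L * t * (norm d)^2" using t by (simp add: p_def power2_eq_square)
  finally have "h' t 1 \<le> 0" by (simp add: h'_def inner_diff_left)
  hence "h 1 \<le> h 0" using eq by simp
  thus ?thesis by (simp add: h_def p_def d_def)
qed

theorem theorem3:
  fixes S :: "'a::euclidean_space set"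
    and f :: "'a \<Rightarrow> real" and f' :: "'a \<Rightarrow> 'a" and g :: "'a \<Rightarrow> 'a"
    and L C \<delta> :: real and x s :: "nat \<Rightarrow> 'a" and K :: nat
  assumes S: "S \<noteq> {}" "compact S" "convex S"
    and deriv: "\<And>y. y \<in> S \<Longrightarrow> (f has_derivative (\<lambda>h. f' y \<bullet> h)) (at y within S)"
    and lip: "\<And>y z. y \<in> S \<Longrightarrow> z \<in> S \<Longrightarrow> norm (f' y - f' z) \<le> L * norm (y - z)"
    and C: "C \<ge> max (L * (diameter S)^2) ((SUP y\<in>S. norm (f' y)) * diameter S)" "C > 0"
    and delta_nonneg: "\<delta> \<ge> 0"
    and approx_grad: "\<And>y t. y \<in> S \<Longrightarrow> t \<in> S \<Longrightarrow>
                   \<bar>(f' y - g y) \<bullet> (t - y)\<bar> \<le> \<delta> * norm (f' y)"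
    and x0: "x 0 \<in> S"
    and sk: "\<And>k. s k \<in> S \<and> (\<forall>t\<in>S. g (x k) \<bullet> (s k - x k) \<le> g (x k) \<bullet> (t - x k))"
    and step: "\<And>k. x (Suc k) = x k +
       scaleR (pos_part (fw_gap S (g (x k)) (x k) - \<delta> * norm (f' (x k))) / C) (s k - x k)"
  shows "(MIN k\<in>{0..K}. pos_part (fw_gap S (f' (x k)) (x k) - 2 * \<delta> * norm (f' (x k))))
           \<le> sqrt (2 * C * (f (x 0) - (INF y\<in>S. f y)) / (real K + 1))"
proof -
  have bS: "bounded S" using S(2) compact_imp_bounded by blast
  have D0: "0 \<le> diameter S" using diameter_ge_0[OF bS] .
  have Dd: "norm (y - z) \<le> diameter S" if "y \<in> S" "z \<in> S" for y z
    using diameter_bounded_bound[OF bS that] by (simp add: dist_norm)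
  obtain y0 where y0: "y0 \<in> S" using S(1) by blast
  have bdd: "bdd_above ((\<lambda>y. norm (f' y)) ` S)"
  proof (rule bdd_aboveI2)
    fix y assume y: "y \<in> S"
    have "norm (f' y) \<le> norm (f' y0) + norm (f' y - f' y0)" by (metis norm_triangle_sub add.commute)
    also have "\<dots> \<le> norm (f' y0) + \<bar>L\<bar> * diameter S"
    proof -
      have "norm (f' y - f' y0) \<le> L * norm (y - y0)" using lip[OF y y0] .
      also have "\<dots> \<le> \<bar>L\<bar> * diameter S"
        by (rule order.trans[OF abs_ge_self], simp add: abs_mult, rule mult_left_mono[OF Dd[OF y y0]], simp)
      finally show ?thesis by simp
    qed
    finally show "norm (f' y) \<le> norm (f' y0) + \<bar>L\<bar> * diameter S" .
  qed
  define Gm where "Gm = (SUP y\<in>S. norm (f' y))"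
  have Gm: "norm (f' y) \<le> Gm" if "y \<in> S" for y
    unfolding Gm_def using cSUP_upper[OF that bdd] .
  have CGD: "Gm * diameter S \<le> C" and CLD: "L * (diameter S)^2 \<le> C" using C(1) by (auto simp: Gm_def)
  define u where "u k = fw_gap S (g (x k)) (x k) - \<delta> * norm (f' (x k))" for k
  define a where "a k = pos_part (u k) / C" for k
  have gt: "fw_gap S (g (x k)) (x k) = g (x k) \<bullet> (x k - s k)" for k
    unfolding fw_gap_def
  proof (rule cSup_eq_maximum)
    show "g (x k) \<bullet> (x k - s k) \<in> (\<lambda>t. g (x k) \<bullet> (x k - t)) ` S" using sk[of k] by auto
    show "\<And>y. y \<in> (\<lambda>t. g (x k) \<bullet> (x k - t)) ` S \<Longrightarrow> y \<le> g (x k) \<bullet> (x k - s k)"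
      using sk[of k] by (auto simp: inner_diff_right)
  qed
  have uC: "u k \<le> C" if xk: "x k \<in> S" for k
  proof -
    have sS: "s k \<in> S" using sk by blast
    have "g (x k) \<bullet> (x k - s k) = f' (x k) \<bullet> (x k - s k) + (f' (x k) - g (x k)) \<bullet> (s k - x k)"
      by (simp add: algebra_simps)
    also have "\<dots> \<le> norm (f' (x k)) * norm (x k - s k) + \<delta> * norm (f' (x k))"
      using norm_cauchy_schwarz[of "f' (x k)" "x k - s k"] approx_grad[OF xk sS] by linarith
    also have "norm (f' (x k)) * norm (x k - s k) \<le> Gm * diameter S"
      by (rule mult_mono[OF Gm[OF xk] Dd[OF xk sS]]) (auto intro: order.trans[OF _ Gm[OF xk]])
    finally show ?thesis using CGD by (simp add: u_def gt)
  qed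
  have a01: "0 \<le> a k \<and> a k \<le> 1" if "x k \<in> S" for k
    using uC[OF that] C(2) by (auto simp: a_def pos_part_def)
  have xS: "x k \<in> S" for k
  proof (induction k)
    case 0 show ?case using x0 .
  next
    case (Suc k)
    have "x (Suc k) = (1 - a k) *\<^sub>R x k + a k *\<^sub>R s k"
      using step[of k] by (simp add: a_def u_def algebra_simps)
    thus ?case using a01[OF Suc] Suc sk[of k] S(3) by (auto simp: convex_alt)
  qed
  have dec: "f (x (Suc k)) \<le> f (x k) - (pos_part (u k))^2 / (2 * C)" for k
  proof -
    have sS: "s k \<in> S" using sk by blast
    define d where "d = s k - x k"
    have xs: "x (Suc k) - x k = a k *\<^sub>R d" using step[of k] by (simp add: a_def u_def d_def)
    have "f (x (Suc k)) \<le> f (x k) + f' (x k) \<bullet> (a k *\<^sub>R d) + L / 2 * (norm (a k *\<^sub>R d))^2"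
      using descent[OF S(3) xS xS deriv lip, of "Suc k" k] xs by simp
    also have "\<dots> = f (x k) + a k * (f' (x k) \<bullet> d) + (a k)^2 * (L * (norm d)^2) / 2"
      by (simp add: power_mult_distrib power2_abs)
    also have "\<dots> \<le> f (x k) + a k * (- u k) + (a k)^2 * C / 2"
    proof -
      have "f' (x k) \<bullet> d = - (g (x k) \<bullet> (x k - s k)) + (f' (x k) - g (x k)) \<bullet> (s k - x k)"
        by (simp add: d_def algebra_simps)
      also have "\<dots> \<le> - u k" using approx_grad[OF xS sS, of k] by (simp add: u_def gt)
      finally have 1: "a k * (f' (x k) \<bullet> d) \<le> a k * (- u k)" using a01[OF xS, of k] by (metis mult_left_mono mult_minus_right)
      have "L * (norm d)^2 \<le> C"
      proof (cases "L \<ge> 0")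
        case True
        have "(norm d)^2 \<le> (diameter S)^2" using Dd[OF sS xS] by (simp add: d_def power_mono)
        hence "L * (norm d)^2 \<le> L * (diameter S)^2" using True by (simp add: mult_left_mono)
        thus ?thesis using CLD by simp
      next
        case False thus ?thesis using C(2) by (smt (verit) mult_nonpos_nonneg zero_le_power2)
      qed
      hence "(a k)^2 * (L * (norm d)^2) \<le> (a k)^2 * C" by (simp add: mult_left_mono)
      thus ?thesis using 1 by linarith
    qed
    also have "\<dots> = f (x k) - (pos_part (u k))^2 / (2 * C)"
      using C(2) by (simp add: a_def pos_part_def power2_eq_square field_simps max_def)
    finally show ?thesis .
  qed
  define v where "v k = pos_part (fw_gap S (f' (x k)) (x k) - 2 * \<delta> * norm (f' (x k)))" for k
  have v0: "0 \<le> v k" for k by (simp add: v_def pos_part_def)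
  have vu: "v k \<le> pos_part (u k)" for k
  proof -
    have "fw_gap S (f' (x k)) (x k) \<le> g (x k) \<bullet> (x k - s k) + \<delta> * norm (f' (x k))"
      unfolding fw_gap_def
    proof (rule cSUP_least[OF S(1)])
      fix t assume t: "t \<in> S"
      have "f' (x k) \<bullet> (x k - t) = g (x k) \<bullet> (x k - t) + (f' (x k) - g (x k)) \<bullet> (x k - t)"
        by (simp add: algebra_simps)
      also have "\<dots> \<le> g (x k) \<bullet> (x k - s k) + \<delta> * norm (f' (x k))"
      proof -
        have "g (x k) \<bullet> (x k - t) \<le> g (x k) \<bullet> (x k - s k)" using sk[of k] t by (auto simp: inner_diff_right)
        moreover have "(f' (x k) - g (x k)) \<bullet> (x k - t) \<le> \<delta> * norm (f' (x k))"
          using approx_grad[OF xS t, of k] by (simp add: inner_diff_right)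
        ultimately show ?thesis by linarith
      qed
      finally show "f' (x k) \<bullet> (x k - t) \<le> g (x k) \<bullet> (x k - s k) + \<delta> * norm (f' (x k))" .
    qed
    thus ?thesis by (simp add: v_def u_def gt pos_part_def)
  qed
  have fcont: "continuous_on S f"
    using deriv by (auto intro!: differentiable_imp_continuous_on simp: differentiable_on_def differentiable_def) blast
  have bddf: "bdd_below (f ` S)"
    using compact_continuous_image[OF fcont S(2)] by (simp add: bounded_imp_bdd_below compact_imp_bounded)
  define fs where "fs = (INF y\<in>S. f y)"
  have fs: "fs \<le> f (x k)" for k unfolding fs_def using cINF_lower[OF bddf xS] .
  have tele: "(\<Sum>k\<le>n. (pos_part (u k))^2 / (2 * C)) \<le> f (x 0) - f (x (Suc n))" for n
  proof (induction n)
    case 0 show ?case using dec[of 0] by simp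
  next
    case (Suc n) thus ?case using dec[of "Suc n"] by simp
  qed
  define m where "m = (MIN k\<in>{0..K}. v k)"
  have mle: "m \<le> v k" if "k \<in> {0..K}" for k unfolding m_def using that by simp
  have m0: "0 \<le> m" unfolding m_def using v0 by simp
  have "(\<Sum>k\<le>K. m^2) \<le> (\<Sum>k\<le>K. (pos_part (u k))^2)"
  proof (rule sum_mono)
    fix k assume "k \<in> {..K}"
    hence "m \<le> pos_part (u k)" using mle[of k] vu[of k] by auto
    thus "m^2 \<le> (pos_part (u k))^2" using m0 by (simp add: power_mono)
  qed
  also have "\<dots> = 2 * C * (\<Sum>k\<le>K. (pos_part (u k))^2 / (2 * C))"
    using C(2) by (simp add: sum_divide_distrib[symmetric])
  also have "\<dots> \<le> 2 * C * (f (x 0) - fs)"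
    using tele[of K] fs[of "Suc K"] C(2) by (simp add: mult_left_mono)
  finally have "(real K + 1) * m^2 \<le> 2 * C * (f (x 0) - fs)" by (simp add: add.commute)
  hence "m^2 \<le> 2 * C * (f (x 0) - fs) / (real K + 1)" by (simp add: field_simps)
  hence "sqrt (m^2) \<le> sqrt (2 * C * (f (x 0) - fs) / (real K + 1))" by (rule real_sqrt_le_mono)
  thus ?thesis using m0 by (simp add: m_def v_def fs_def)
qed

end
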